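(* Let $\alpha\in\mathbb T\setminus\{1\}$. For $r\in[0,\infty)\setminus\{1\}$ define $T_r:L^2(\mu)\to L^2(\mu_\alpha)$ by $$T_rf(z)=\int_{\mathbb T}\frac{f(\xi)\,d\mu(\xi)}{1-r\overline\xi z}.$$ Then $\sup_{r\in[0,\infty)\setminus\{1\}}\|T_r\|_{L^2(\mu)\to L^2(\mu_\alpha)}<\infty$.
   Context: $\mathbb T=\{|z|=1\}$. Let $\mu$ be a Borel probability measure on $\mathbb T$, $U=M_\xi$ multiplication by the independent variable on $L^2(\mu)$. For $\alpha\in\mathbb T$, $U_\alpha$ is the unitary operator $(U_\alpha f)(\xi)=\xi f(\xi)+(\alpha-1)\int_{\mathbb T}f(\zeta)\zeta\,d\mu(\zeta)$ on $L^2(\mu)$ (a rank one perturbation of $U$ with $*$-cyclic vector $\mathbf 1$), and $\mu_\alpha$ is its spectral measure with respect to $\mathbf 1$, i.e. the probability measure with $\int z^nd\mu_\alpha(z)=(U_\alpha^n\mathbf 1,\mathbf 1)_{L^2(\mu)}$ for all $n\in\mathbb Z$. *)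

theory Defs
  imports "HOL-Probability.Probability"
begin

definition Ualpha :: "complex measure \<Rightarrow> complex \<Rightarrow> (complex \<Rightarrow> complex) \<Rightarrow> (complex \<Rightarrow> complex)" where
  "Ualpha \<mu> \<alpha> f = (\<lambda>\<xi>. \<xi> * f \<xi> + (\<alpha> - 1) * (\<integral>\<zeta>. f \<zeta> * \<zeta> \<partial>\<mu>))"

text \<open>nu is the spectral measure mu_alpha of U_alpha with respect to the constant function 1:
  a Borel probability measure on the unit circle with
  integral z^n dnu = (U_alpha^n 1, 1)_{L^2(mu)} = integral (U_alpha^n 1) dmu.
  For negative n the moments are determined by conjugation (|z| = 1 on the support and
  U_alpha is unitary), so it suffices to prescribe n >= 0.\<close>
definition is_spectral_measure_alpha :: "complex measure \<Rightarrow> complex \<Rightarrow> complex measure \<Rightarrow> bool" where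
  "is_spectral_measure_alpha \<mu> \<alpha> \<nu> \<longleftrightarrow>
     prob_space \<nu> \<and> sets \<nu> = sets borel \<and> (AE z in \<nu>. cmod z = 1) \<and>
     (\<forall>n::nat. (\<integral>z. z ^ n \<partial>\<nu>) = (\<integral>\<xi>. ((Ualpha \<mu> \<alpha>) ^^ n) (\<lambda>_. 1) \<xi> \<partial>\<mu>))"

definition Tr :: "complex measure \<Rightarrow> real \<Rightarrow> (complex \<Rightarrow> complex) \<Rightarrow> complex \<Rightarrow> complex" where
  "Tr \<mu> r f z = (\<integral>\<xi>. f \<xi> / (1 - complex_of_real r * cnj \<xi> * z) \<partial>\<mu>)"

end

theory Submission
  imports Defs
begin



lemma meas_cnj[measurable]: "g \<in> borel_measurable M \<Longrightarrow> (\<lambda>x. cnj (g x)) \<in> borel_measurable M"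
  by (rule borel_measurable_continuous_on[OF continuous_on_cnj[OF continuous_on_id]])

lemma aux1: "0 \<le> (t::real) \<Longrightarrow> t \<le> 1 + t\<^sup>2"
proof -
  assume "0 \<le> t"
  have "0 \<le> (t - 1)\<^sup>2" by simp
  then show ?thesis using \<open>0 \<le> t\<close> by (simp add: power2_diff)
qed

lemma aux2: "(a::real) * b \<le> a\<^sup>2 + b\<^sup>2"
proof -
  have "0 \<le> (a - b)\<^sup>2" by simp
  then have "2 * a * b \<le> a\<^sup>2 + b\<^sup>2" by (simp add: power2_diff)
  moreover have "0 \<le> a\<^sup>2 + b\<^sup>2" by simp
  ultimately show ?thesis by linarith
qed

lemma aux3: "((a::real) + b)\<^sup>2 \<le> 2 * a\<^sup>2 + 2 * b\<^sup>2"
proof -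
  have "0 \<le> (a - b)\<^sup>2" by simp
  then show ?thesis by (simp add: power2_diff power2_sum)
qed

locale clark = prob_space \<mu> for \<mu> :: "complex measure" +
  fixes \<alpha> :: complex
  assumes sets_mu: "sets \<mu> = sets borel"
    and circ: "AE z in \<mu>. cmod z = 1"
    and alpha1: "cmod \<alpha> = 1"
begin

abbreviation U where "U \<equiv> Ualpha \<mu> \<alpha>"

lemma meas_eq: "borel_measurable \<mu> = (borel_measurable borel :: (complex \<Rightarrow> 'b::topological_space) set)"
  by (rule measurable_cong_sets[OF sets_mu refl])

lemma meas_id[measurable]: "(\<lambda>x. x) \<in> borel_measurable \<mu>"
  unfolding meas_eq by simp

definition L2 :: "(complex \<Rightarrow> complex) \<Rightarrow> bool" where
  "L2 g \<longleftrightarrow> g \<in> borel_measurable \<mu> \<and> integrable \<mu> (\<lambda>x. (cmod (g x))\<^sup>2)"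

lemma L2_meas: "L2 g \<Longrightarrow> g \<in> borel_measurable \<mu>" by (simp add: L2_def)
lemma L2_sq: "L2 g \<Longrightarrow> integrable \<mu> (\<lambda>x. (cmod (g x))\<^sup>2)" by (simp add: L2_def)

lemma L2_int: assumes "L2 g" shows "integrable \<mu> g"
proof (rule Bochner_Integration.integrable_bound[where f="\<lambda>x. 1 + (cmod (g x))\<^sup>2"])
  show "integrable \<mu> (\<lambda>x. 1 + (cmod (g x))\<^sup>2)" using L2_sq[OF assms] by simp
  show "g \<in> borel_measurable \<mu>" using L2_meas[OF assms] .
  show "AE x in \<mu>. norm (g x) \<le> norm (1 + (cmod (g x))\<^sup>2)"
  proof (intro AE_I2)
    fix x
    have "cmod (g x) \<le> 1 + (cmod (g x))\<^sup>2" by (rule aux1) simp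
    then show "norm (g x) \<le> norm (1 + (cmod (g x))\<^sup>2)" by simp
  qed
qed

lemma L2_mult: assumes "L2 g" "L2 h" shows "integrable \<mu> (\<lambda>x. g x * h x)"
proof (rule Bochner_Integration.integrable_bound[where f="\<lambda>x. (cmod (g x))\<^sup>2 + (cmod (h x))\<^sup>2"])
  show "integrable \<mu> (\<lambda>x. (cmod (g x))\<^sup>2 + (cmod (h x))\<^sup>2)" using L2_sq[OF assms(1)] L2_sq[OF assms(2)] by simp
  show "(\<lambda>x. g x * h x) \<in> borel_measurable \<mu>" using L2_meas[OF assms(1)] L2_meas[OF assms(2)] by simp
  show "AE x in \<mu>. norm (g x * h x) \<le> norm ((cmod (g x))\<^sup>2 + (cmod (h x))\<^sup>2)"
  proof (intro AE_I2)
    fix x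
    have "cmod (g x) * cmod (h x) \<le> (cmod (g x))\<^sup>2 + (cmod (h x))\<^sup>2"
      by (rule aux2)
    then show "norm (g x * h x) \<le> norm ((cmod (g x))\<^sup>2 + (cmod (h x))\<^sup>2)" by (simp add: norm_mult)
  qed
qed

lemma L2_add: assumes "L2 g" "L2 h" shows "L2 (\<lambda>x. g x + h x)"
  unfolding L2_def
proof
  show "(\<lambda>x. g x + h x) \<in> borel_measurable \<mu>" using L2_meas[OF assms(1)] L2_meas[OF assms(2)] by simp
  show "integrable \<mu> (\<lambda>x. (cmod (g x + h x))\<^sup>2)"
  proof (rule Bochner_Integration.integrable_bound[where f="\<lambda>x. 2 * (cmod (g x))\<^sup>2 + 2 * (cmod (h x))\<^sup>2"])
    show "integrable \<mu> (\<lambda>x. 2 * (cmod (g x))\<^sup>2 + 2 * (cmod (h x))\<^sup>2)"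
      using L2_sq[OF assms(1)] L2_sq[OF assms(2)] by simp
    show "(\<lambda>x. (cmod (g x + h x))\<^sup>2) \<in> borel_measurable \<mu>" using L2_meas[OF assms(1)] L2_meas[OF assms(2)] by simp
    show "AE x in \<mu>. norm ((cmod (g x + h x))\<^sup>2) \<le> norm (2 * (cmod (g x))\<^sup>2 + 2 * (cmod (h x))\<^sup>2)"
    proof (intro AE_I2)
      fix x
      have t: "cmod (g x + h x) \<le> cmod (g x) + cmod (h x)" by (rule norm_triangle_ineq)
      have "(cmod (g x + h x))\<^sup>2 \<le> (cmod (g x) + cmod (h x))\<^sup>2"
        using t by (intro power_mono) auto
      also have "\<dots> \<le> 2 * (cmod (g x))\<^sup>2 + 2 * (cmod (h x))\<^sup>2"
        by (rule aux3)
      finally show "norm ((cmod (g x + h x))\<^sup>2) \<le> norm (2 * (cmod (g x))\<^sup>2 + 2 * (cmod (h x))\<^sup>2)" by simp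
    qed
  qed
qed

lemma L2_cmult: assumes "L2 g" shows "L2 (\<lambda>x. c * g x)"
proof -
  note [measurable] = L2_meas[OF assms]
  show ?thesis using assms unfolding L2_def by (simp add: norm_mult power_mult_distrib)
qed

lemma L2_const: "L2 (\<lambda>x. c)"
  unfolding L2_def by simp

lemma L2_cnj: assumes "L2 g" shows "L2 (\<lambda>x. cnj (g x))"
proof -
  note [measurable] = L2_meas[OF assms]
  show ?thesis using assms unfolding L2_def by simp
qed

lemma L2_unimod: assumes "L2 g" "u \<in> borel_measurable \<mu>" "AE x in \<mu>. cmod (u x) = 1"
  shows "L2 (\<lambda>x. u x * g x)" and "(\<integral>x. (cmod (u x * g x))\<^sup>2 \<partial>\<mu>) = (\<integral>x. (cmod (g x))\<^sup>2 \<partial>\<mu>)"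
proof -
  have ae: "AE x in \<mu>. (cmod (u x * g x))\<^sup>2 = (cmod (g x))\<^sup>2"
    using assms(3) by eventually_elim (simp add: norm_mult)
  have m: "(\<lambda>x. (cmod (u x * g x))\<^sup>2) \<in> borel_measurable \<mu>" "(\<lambda>x. (cmod (g x))\<^sup>2) \<in> borel_measurable \<mu>"
    using assms(2) L2_meas[OF assms(1)] by auto
  show "L2 (\<lambda>x. u x * g x)" unfolding L2_def
    using integrable_cong_AE[OF m ae] L2_sq[OF assms(1)] assms(2) L2_meas[OF assms(1)] by simp
  show "(\<integral>x. (cmod (u x * g x))\<^sup>2 \<partial>\<mu>) = (\<integral>x. (cmod (g x))\<^sup>2 \<partial>\<mu>)"
    by (rule integral_cong_AE[OF m ae])
qed

lemma circ_pow: "AE x in \<mu>. cmod (cnj x ^ n) = 1" "AE x in \<mu>. cmod x = 1"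
  using circ by (auto elim!: eventually_mono simp: norm_power)

lemma L2_pow: assumes "L2 g" shows "L2 (\<lambda>x. cnj x ^ n * g x)" "L2 (\<lambda>x. x * g x)"
   "(\<integral>x. (cmod (cnj x ^ n * g x))\<^sup>2 \<partial>\<mu>) = (\<integral>x. (cmod (g x))\<^sup>2 \<partial>\<mu>)"
proof -
  have m: "(\<lambda>x. cnj x ^ n) \<in> borel_measurable \<mu>" by measurable
  show "L2 (\<lambda>x. cnj x ^ n * g x)" "(\<integral>x. (cmod (cnj x ^ n * g x))\<^sup>2 \<partial>\<mu>) = (\<integral>x. (cmod (g x))\<^sup>2 \<partial>\<mu>)"
    using L2_unimod[OF assms m circ_pow(1)] by auto
  show "L2 (\<lambda>x. x * g x)" using L2_unimod[OF assms meas_id circ_pow(2)] by auto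
qed

lemma L2_sum: "(\<And>i. i \<in> A \<Longrightarrow> L2 (g i)) \<Longrightarrow> L2 (\<lambda>x. \<Sum>i\<in>A. g i x)"
proof (induction A rule: infinite_finite_induct)
  case (insert a A) then show ?case using L2_add[of "g a" "\<lambda>x. \<Sum>i\<in>A. g i x"] by simp
qed (auto simp: L2_const)

lemma nrm_ip: assumes "L2 g"
  shows "complex_of_real (\<integral>x. (cmod (g x))\<^sup>2 \<partial>\<mu>) = (\<integral>x. g x * cnj (g x) \<partial>\<mu>)"
proof -
  have "\<And>x. complex_of_real ((cmod (g x))\<^sup>2) = g x * cnj (g x)" by (rule complex_norm_square)
  then show ?thesis by (simp only: integral_complex_of_real[symmetric])
qed

end


context clark begin

lemma L2_id: "L2 (\<lambda>x. x)"
  using L2_pow(2)[OF L2_const[of 1]] by simp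

lemma int_gz: "L2 g \<Longrightarrow> integrable \<mu> (\<lambda>\<zeta>. g \<zeta> * \<zeta>)"
  using L2_mult[OF _ L2_id] by blast

lemma L2_U: assumes "L2 g" shows "L2 (U g)"
  unfolding Ualpha_def by (rule L2_add[OF L2_pow(2)[OF assms] L2_const])

lemma U_lin: assumes "L2 g" "L2 h"
  shows "U (\<lambda>x. g x + k * h x) = (\<lambda>x. U g x + k * U h x)"
proof -
  have "(\<integral>\<zeta>. (g \<zeta> + k * h \<zeta>) * \<zeta> \<partial>\<mu>) = (\<integral>\<zeta>. g \<zeta> * \<zeta> + k * (h \<zeta> * \<zeta>) \<partial>\<mu>)"
    by (simp add: algebra_simps)
  also have "\<dots> = (\<integral>\<zeta>. g \<zeta> * \<zeta> \<partial>\<mu>) + k * (\<integral>\<zeta>. h \<zeta> * \<zeta> \<partial>\<mu>)"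
    using int_gz[OF assms(1)] int_gz[OF assms(2)] by simp
  finally show ?thesis unfolding Ualpha_def by (simp add: fun_eq_iff algebra_simps)
qed

lemma U_cong: assumes "L2 g" "L2 h" "AE x in \<mu>. g x = h x"
  shows "AE x in \<mu>. U g x = U h x"
proof -
  have "(\<integral>\<zeta>. g \<zeta> * \<zeta> \<partial>\<mu>) = (\<integral>\<zeta>. h \<zeta> * \<zeta> \<partial>\<mu>)"
    using assms(3) L2_meas[OF assms(1)] L2_meas[OF assms(2)]
    by (intro integral_cong_AE) (auto elim!: eventually_mono)
  then show ?thesis using assms(3) unfolding Ualpha_def by (auto elim!: eventually_mono)
qed

lemma U_iso: assumes g: "L2 g" and h: "L2 h"
  shows "(\<integral>x. U g x * cnj (U h x) \<partial>\<mu>) = (\<integral>x. g x * cnj (h x) \<partial>\<mu>)"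
proof -
  define cg where "cg = (\<integral>\<zeta>. g \<zeta> * \<zeta> \<partial>\<mu>)"
  define ch where "ch = (\<integral>\<zeta>. h \<zeta> * \<zeta> \<partial>\<mu>)"
  define a where "a = (\<alpha> - 1) * cg"
  define b where "b = (\<alpha> - 1) * ch"
  note [measurable] = L2_meas[OF g] L2_meas[OF h]
  have ae: "AE x in \<mu>. U g x * cnj (U h x) = g x * cnj (h x) + cnj b * (g x * x) + a * cnj (h x * x) + a * cnj b"
    using circ
  proof eventually_elim
    case (elim x)
    have "x * cnj x = 1" using elim complex_norm_square[of x] by simp
    then have "x * g x * cnj (x * h x) = g x * cnj (h x)"
      by (simp add: algebra_simps)
    then show ?case unfolding Ualpha_def cg_def[symmetric] ch_def[symmetric] a_def[symmetric] b_def[symmetric]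
      by (simp add: algebra_simps)
  qed
  have i1: "integrable \<mu> (\<lambda>x. g x * cnj (h x))" using L2_mult[OF g L2_cnj[OF h]] .
  have i2: "integrable \<mu> (\<lambda>x. g x * x)" using int_gz[OF g] .
  have i3: "integrable \<mu> (\<lambda>x. h x * x)" using int_gz[OF h] .
  have "(\<integral>x. U g x * cnj (U h x) \<partial>\<mu>) = (\<integral>x. g x * cnj (h x) + cnj b * (g x * x) + a * cnj (h x * x) + a * cnj b \<partial>\<mu>)"
    apply (rule integral_cong_AE[OF _ _ ae])
    using L2_mult[OF L2_U[OF g] L2_cnj[OF L2_U[OF h]]] by (auto simp: L2_def)
  also have "\<dots> = (\<integral>x. g x * cnj (h x) \<partial>\<mu>) + cnj b * cg + a * cnj ch + a * cnj b"
    using i1 i2 i3 by (simp add: cg_def ch_def prob_space del: complex_cnj_mult)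
  also have "\<dots> = (\<integral>x. g x * cnj (h x) \<partial>\<mu>) + (cnj b * cg + a * cnj ch + a * cnj b)"
    by (simp add: add.assoc)
  also have "cnj b * cg + a * cnj ch + a * cnj b = 0"
  proof -
    have "cnj b * cg + a * cnj ch + a * cnj b = cg * cnj ch * (\<alpha> * cnj \<alpha> - 1)"
      unfolding a_def b_def by (simp add: algebra_simps)
    also have "\<alpha> * cnj \<alpha> = 1" using alpha1 complex_norm_square[of \<alpha>] by simp
    finally show ?thesis by simp
  qed
  finally show ?thesis by simp
qed

lemma L2_Un: "L2 g \<Longrightarrow> L2 ((U ^^ n) g)"
  by (induction n) (auto simp: L2_U)

lemma Un_lin: assumes "L2 g" "L2 h"
  shows "(U ^^ n) (\<lambda>x. g x + k * h x) = (\<lambda>x. (U ^^ n) g x + k * (U ^^ n) h x)"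
proof (induction n)
  case (Suc n)
  show ?case using U_lin[OF L2_Un[OF assms(1)] L2_Un[OF assms(2)], of n k] Suc by simp
qed simp

lemma Un_cong: assumes "L2 g" "L2 h" "AE x in \<mu>. g x = h x"
  shows "AE x in \<mu>. (U ^^ n) g x = (U ^^ n) h x"
proof (induction n)
  case (Suc n)
  show ?case using U_cong[OF L2_Un[OF assms(1)] L2_Un[OF assms(2)] Suc] by simp
qed (use assms in simp)

lemma Un_iso: assumes "L2 g" "L2 h"
  shows "(\<integral>x. (U ^^ n) g x * cnj ((U ^^ n) h x) \<partial>\<mu>) = (\<integral>x. g x * cnj (h x) \<partial>\<mu>)"
proof (induction n)
  case (Suc n)
  show ?case using U_iso[OF L2_Un[OF assms(1)] L2_Un[OF assms(2)], of n] Suc by simp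
qed simp

end



definition W :: "real \<Rightarrow> nat \<Rightarrow> nat \<Rightarrow> real" where
  "W r N n = (if 1 \<le> n then r ^ (n - 1) else 0) - (if n < N then r ^ n else 0)"

lemma abel1: "(\<Sum>n<N. complex_of_real (r ^ n) * y (Suc n)) =
   (\<Sum>n\<le>N. complex_of_real (if 1 \<le> n then r ^ (n - 1) else 0) * y n)"
  by (induction N) auto

lemma abel2: "(\<Sum>n<N. complex_of_real (r ^ n) * y n) =
   (\<Sum>n\<le>N. complex_of_real (if n < N then r ^ n else 0) * y n)"
proof -
  have "(\<Sum>n\<le>N. complex_of_real (if n < N then r ^ n else 0) * y n) =
     (\<Sum>n<Suc N. complex_of_real (if n < N then r ^ n else 0) * y n)"
    by (simp only: lessThan_Suc_atMost)
  also have "\<dots> = (\<Sum>n<N. complex_of_real (if n < N then r ^ n else 0) * y n)"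
    by simp
  also have "\<dots> = (\<Sum>n<N. complex_of_real (r ^ n) * y n)"
    by (rule sum.cong) auto
  finally show ?thesis by simp
qed

lemma abel: "(\<Sum>n<N. complex_of_real (r ^ n) * (y (Suc n) - y n)) =
   (\<Sum>n\<le>N. complex_of_real (W r N n) * y n)"
  unfolding W_def of_real_diff left_diff_distrib sum_subtractf right_diff_distrib
  by (simp only: abel1 abel2)

lemma sumA: "(\<Sum>n\<le>N. (if n = 0 then 1 else (r::real) ^ (n - 1))) = 1 + (\<Sum>n<N. r ^ n)"
  by (induction N) auto

lemma sumB: "(\<Sum>n<N. (if 1 \<le> n then (r::real) ^ n else 0)) = (\<Sum>n<N. r ^ n) - (if 1 \<le> N then 1 else 0)"
  by (induction N) (auto simp: Suc_le_eq)

lemma W_sum: assumes "0 \<le> r" "r \<le> 1" shows "(\<Sum>n\<le>N. \<bar>W r N n\<bar>) \<le> 2"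
proof (cases N)
  case 0 then show ?thesis by (simp add: W_def)
next
  case (Suc M)
  have eq: "\<bar>W r N n\<bar> = (if n = 0 then 1 else r ^ (n - 1)) - (if 1 \<le> n \<and> n < N then r ^ n else 0)"
    if "n \<le> N" for n
  proof -
    consider "n = 0" | "1 \<le> n" "n < N" | "n = N" "1 \<le> n" using \<open>n \<le> N\<close> Suc by linarith
    then show ?thesis
    proof cases
      case 2
      then obtain k where k: "n = Suc k" by (cases n) auto
      have "r ^ n \<le> r ^ k" unfolding k using assms by (simp add: mult_left_le_one_le)
      then show ?thesis using 2 k by (simp add: W_def)
    qed (use Suc assms in \<open>auto simp: W_def\<close>)
  qed
  have Y: "(\<Sum>n\<le>N. (if 1 \<le> n \<and> n < N then r ^ n else 0)) = (\<Sum>n<N. (if 1 \<le> n then r ^ n else 0))"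
  proof -
    have "(\<Sum>n\<le>N. (if 1 \<le> n \<and> n < N then r ^ n else 0)) = (\<Sum>n<Suc N. (if 1 \<le> n \<and> n < N then r ^ n else 0))"
      by (simp only: lessThan_Suc_atMost)
    also have "\<dots> = (\<Sum>n<N. (if 1 \<le> n \<and> n < N then r ^ n else 0))" by simp
    also have "\<dots> = (\<Sum>n<N. (if 1 \<le> n then r ^ n else 0))" by (rule sum.cong) auto
    finally show ?thesis .
  qed
  have "(\<Sum>n\<le>N. \<bar>W r N n\<bar>) = (\<Sum>n\<le>N. (if n = 0 then 1 else r ^ (n - 1))) - (\<Sum>n\<le>N. (if 1 \<le> n \<and> n < N then r ^ n else 0))"
    by (simp add: eq sum_subtractf)
  also have "\<dots> = (1 + (\<Sum>n<N. r ^ n)) - ((\<Sum>n<N. r ^ n) - (if 1 \<le> N then 1 else 0))"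
    by (simp only: Y sumA sumB)
  finally show ?thesis using Suc by simp
qed

lemma cs_point: "finite A \<Longrightarrow> (cmod (\<Sum>n\<in>A. complex_of_real (w n) * y n))\<^sup>2 \<le>
    (\<Sum>n\<in>A. \<bar>w n\<bar>) * (\<Sum>n\<in>A. \<bar>w n\<bar> * (cmod (y n))\<^sup>2)"
proof -
  assume fin: "finite A"
  have "cmod (\<Sum>n\<in>A. complex_of_real (w n) * y n) \<le> (\<Sum>n\<in>A. cmod (complex_of_real (w n) * y n))"
    by (rule norm_sum)
  also have "\<dots> = (\<Sum>n\<in>A. sqrt \<bar>w n\<bar> * (sqrt \<bar>w n\<bar> * cmod (y n)))"
    by (rule sum.cong) (auto simp: norm_mult real_sqrt_mult_self mult.assoc[symmetric])
  finally have 1: "(cmod (\<Sum>n\<in>A. complex_of_real (w n) * y n))\<^sup>2 \<le> (\<Sum>n\<in>A. sqrt \<bar>w n\<bar> * (sqrt \<bar>w n\<bar> * cmod (y n)))\<^sup>2"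
    by (intro power_mono) auto
  also have "\<dots> \<le> (\<Sum>n\<in>A. (sqrt \<bar>w n\<bar>)\<^sup>2) * (\<Sum>n\<in>A. (sqrt \<bar>w n\<bar> * cmod (y n))\<^sup>2)"
    by (rule Cauchy_Schwarz_ineq_sum)
  also have "\<dots> = (\<Sum>n\<in>A. \<bar>w n\<bar>) * (\<Sum>n\<in>A. \<bar>w n\<bar> * (cmod (y n))\<^sup>2)"
    by (simp add: power_mult_distrib)
  finally show ?thesis .
qed

context clark begin

definition P where "P n = (U ^^ n) (\<lambda>_. 1)"
definition aco where "aco f n = (\<integral>\<xi>. f \<xi> * cnj \<xi> ^ n \<partial>\<mu>)"
definition Xf where "Xf f n = (U ^^ n) (\<lambda>\<xi>. cnj \<xi> ^ n * f \<xi>)"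

lemma L2_P: "L2 (P n)" unfolding P_def by (rule L2_Un[OF L2_const])

lemma X_step: assumes f: "L2 f"
  shows "AE x in \<mu>. Xf f (Suc n) x = Xf f n x + ((\<alpha> - 1) * aco f n) * P n x"
proof -
  note [measurable] = L2_meas[OF f]
  define k where "k = (\<alpha> - 1) * aco f n"
  have int: "(\<integral>\<zeta>. cnj \<zeta> ^ Suc n * f \<zeta> * \<zeta> \<partial>\<mu>) = aco f n"
    unfolding aco_def
  proof (rule integral_cong_AE)
    show "AE x in \<mu>. cnj x ^ Suc n * f x * x = f x * cnj x ^ n"
      using circ
    proof eventually_elim
      case (elim x)
      have "x * cnj x = 1" using elim complex_norm_square[of x] by simp
      then show ?case by (simp add: algebra_simps)
    qed
  qed measurable
  have ae1: "AE \<xi> in \<mu>. U (\<lambda>\<xi>. cnj \<xi> ^ Suc n * f \<xi>) \<xi> = cnj \<xi> ^ n * f \<xi> + k * 1"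
    using circ
  proof eventually_elim
    case (elim x)
    have "x * cnj x = 1" using elim complex_norm_square[of x] by simp
    then have "x * (cnj x ^ Suc n * f x) = cnj x ^ n * f x" by (simp add: algebra_simps)
    then show ?case unfolding Ualpha_def using int by (simp add: k_def)
  qed
  have L1: "L2 (U (\<lambda>\<xi>. cnj \<xi> ^ Suc n * f \<xi>))" by (rule L2_U[OF L2_pow(1)[OF f]])
  have L2': "L2 (\<lambda>\<xi>. cnj \<xi> ^ n * f \<xi> + k * 1)"
    by (rule L2_add[OF L2_pow(1)[OF f] L2_const])
  have "AE \<xi> in \<mu>. (U ^^ n) (U (\<lambda>\<xi>. cnj \<xi> ^ Suc n * f \<xi>)) \<xi> = (U ^^ n) (\<lambda>\<xi>. cnj \<xi> ^ n * f \<xi> + k * 1) \<xi>"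
    by (rule Un_cong[OF L1 L2' ae1])
  moreover have "(U ^^ n) (\<lambda>\<xi>. cnj \<xi> ^ n * f \<xi> + k * 1) = (\<lambda>x. Xf f n x + k * P n x)"
    using Un_lin[OF L2_pow(1)[OF f] L2_const[of 1], where n=n and k=k] by (simp add: Xf_def P_def)
  moreover have "(U ^^ n) (U (\<lambda>\<xi>. cnj \<xi> ^ Suc n * f \<xi>)) = Xf f (Suc n)"
    by (simp add: Xf_def funpow_Suc_right del: funpow.simps)
  ultimately show ?thesis by (simp add: k_def)
qed

lemma L2_X: "L2 f \<Longrightarrow> L2 (Xf f n)"
  unfolding Xf_def by (rule L2_Un[OF L2_pow(1)])

lemma X_norm: assumes f: "L2 f" shows "(\<integral>x. (cmod (Xf f n x))\<^sup>2 \<partial>\<mu>) = (\<integral>x. (cmod (f x))\<^sup>2 \<partial>\<mu>)"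
proof -
  have "complex_of_real (\<integral>x. (cmod (Xf f n x))\<^sup>2 \<partial>\<mu>) = (\<integral>x. Xf f n x * cnj (Xf f n x) \<partial>\<mu>)"
    by (rule nrm_ip[OF L2_X[OF f]])
  also have "\<dots> = (\<integral>x. cnj x ^ n * f x * cnj (cnj x ^ n * f x) \<partial>\<mu>)"
    unfolding Xf_def by (rule Un_iso[OF L2_pow(1)[OF f] L2_pow(1)[OF f]])
  also have "\<dots> = complex_of_real (\<integral>x. (cmod (cnj x ^ n * f x))\<^sup>2 \<partial>\<mu>)"
    by (rule nrm_ip[OF L2_pow(1)[OF f], symmetric])
  finally have "complex_of_real (\<integral>x. (cmod (Xf f n x))\<^sup>2 \<partial>\<mu>) = complex_of_real (\<integral>x. (cmod (cnj x ^ n * f x))\<^sup>2 \<partial>\<mu>)" .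
  then show ?thesis using L2_pow(3)[OF f] by simp
qed

lemma G_bound: assumes f: "L2 f" and r: "0 \<le> r" "r \<le> 1" and a: "\<alpha> \<noteq> 1"
  shows "(\<integral>x. (cmod (\<Sum>n<N. (complex_of_real (r ^ n) * aco f n) * P n x))\<^sup>2 \<partial>\<mu>)
     \<le> 4 / (cmod (\<alpha> - 1))\<^sup>2 * (\<integral>x. (cmod (f x))\<^sup>2 \<partial>\<mu>)"
proof -
  define G where "G x = (\<Sum>n<N. (complex_of_real (r ^ n) * aco f n) * P n x)" for x
  define F where "F = (\<integral>x. (cmod (f x))\<^sup>2 \<partial>\<mu>)"
  have F0: "0 \<le> F" unfolding F_def by simp
  have LG: "L2 G" unfolding G_def by (intro L2_sum L2_cmult L2_P)
  have ae: "AE x in \<mu>. \<forall>n. Xf f (Suc n) x = Xf f n x + ((\<alpha> - 1) * aco f n) * P n x"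
    using X_step[OF f] by (simp add: AE_all_countable)
  have ae2: "AE x in \<mu>. (cmod ((\<alpha> - 1) * G x))\<^sup>2 \<le> 2 * (\<Sum>n\<le>N. \<bar>W r N n\<bar> * (cmod (Xf f n x))\<^sup>2)"
    using ae
  proof eventually_elim
    case (elim x)
    have "(\<alpha> - 1) * G x = (\<Sum>n<N. complex_of_real (r ^ n) * (Xf f (Suc n) x - Xf f n x))"
      unfolding G_def sum_distrib_left by (rule sum.cong) (auto simp: elim algebra_simps)
    also have "\<dots> = (\<Sum>n\<le>N. complex_of_real (W r N n) * Xf f n x)" by (rule abel)
    finally have "(cmod ((\<alpha> - 1) * G x))\<^sup>2 \<le> (\<Sum>n\<le>N. \<bar>W r N n\<bar>) * (\<Sum>n\<le>N. \<bar>W r N n\<bar> * (cmod (Xf f n x))\<^sup>2)"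
      using cs_point[of "{..N}"] by simp
    also have "\<dots> \<le> 2 * (\<Sum>n\<le>N. \<bar>W r N n\<bar> * (cmod (Xf f n x))\<^sup>2)"
      by (rule mult_right_mono[OF W_sum[OF r]]) (simp add: sum_nonneg)
    finally show ?case .
  qed
  have "(cmod (\<alpha> - 1))\<^sup>2 * (\<integral>x. (cmod (G x))\<^sup>2 \<partial>\<mu>) = (\<integral>x. (cmod ((\<alpha> - 1) * G x))\<^sup>2 \<partial>\<mu>)"
    by (simp add: norm_mult power_mult_distrib)
  also have "\<dots> \<le> (\<integral>x. 2 * (\<Sum>n\<le>N. \<bar>W r N n\<bar> * (cmod (Xf f n x))\<^sup>2) \<partial>\<mu>)"
  proof (rule integral_mono_AE[OF _ _ ae2])
    show "integrable \<mu> (\<lambda>x. (cmod ((\<alpha> - 1) * G x))\<^sup>2)" using L2_sq[OF L2_cmult[OF LG]] .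
    show "integrable \<mu> (\<lambda>x. 2 * (\<Sum>n\<le>N. \<bar>W r N n\<bar> * (cmod (Xf f n x))\<^sup>2))"
      using L2_sq[OF L2_X[OF f]] by auto
  qed
  also have "\<dots> = 2 * (\<Sum>n\<le>N. \<bar>W r N n\<bar> * F)"
    using L2_sq[OF L2_X[OF f]] by (simp add: X_norm[OF f] F_def)
  also have "\<dots> = 2 * (\<Sum>n\<le>N. \<bar>W r N n\<bar>) * F" by (simp add: sum_distrib_right)
  also have "\<dots> \<le> 2 * 2 * F" using W_sum[OF r, of N] F0 by (intro mult_right_mono) auto
  finally have "(cmod (\<alpha> - 1))\<^sup>2 * (\<integral>x. (cmod (G x))\<^sup>2 \<partial>\<mu>) \<le> 4 * F" by simp
  moreover have "0 < (cmod (\<alpha> - 1))\<^sup>2" using a by simp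
  ultimately show ?thesis unfolding G_def[symmetric] F_def[symmetric]
    by (simp add: field_simps mult.commute)
qed

end



lemma quad:
  fixes \<phi> :: "nat \<Rightarrow> 'a \<Rightarrow> complex"
  assumes "finite A" "\<And>n m. n \<in> A \<Longrightarrow> m \<in> A \<Longrightarrow> integrable M (\<lambda>x. \<phi> n x * cnj (\<phi> m x))"
  shows "complex_of_real (\<integral>x. (cmod (\<Sum>n\<in>A. b n * \<phi> n x))\<^sup>2 \<partial>M) =
     (\<Sum>n\<in>A. \<Sum>m\<in>A. b n * cnj (b m) * (\<integral>x. \<phi> n x * cnj (\<phi> m x) \<partial>M))"
proof -
  have "complex_of_real (\<integral>x. (cmod (\<Sum>n\<in>A. b n * \<phi> n x))\<^sup>2 \<partial>M) =
     (\<integral>x. complex_of_real ((cmod (\<Sum>n\<in>A. b n * \<phi> n x))\<^sup>2) \<partial>M)"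
    by (rule integral_complex_of_real[symmetric])
  also have "\<dots> = (\<integral>x. (\<Sum>n\<in>A. \<Sum>m\<in>A. b n * cnj (b m) * (\<phi> n x * cnj (\<phi> m x))) \<partial>M)"
    by (rule Bochner_Integration.integral_cong[OF refl])
       (simp only: complex_norm_square cnj_sum sum_product complex_cnj_mult ac_simps)
  also have "\<dots> = (\<Sum>n\<in>A. \<Sum>m\<in>A. b n * cnj (b m) * (\<integral>x. \<phi> n x * cnj (\<phi> m x) \<partial>M))"
    using assms by (simp add: Bochner_Integration.integral_sum)
  finally show ?thesis .
qed

locale clark2 = clark +
  fixes \<nu> :: "complex measure"
  assumes spec: "is_spectral_measure_alpha \<mu> \<alpha> \<nu>"
begin

lemma nu_prob: "prob_space \<nu>" and sets_nu: "sets \<nu> = sets borel" and circ_nu: "AE z in \<nu>. cmod z = 1"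
  and mom: "(\<integral>z. z ^ n \<partial>\<nu>) = (\<integral>x. P n x \<partial>\<mu>)"
  using spec unfolding is_spectral_measure_alpha_def P_def by auto

interpretation nu: prob_space \<nu> by (rule nu_prob)

lemma meas_eq_nu: "borel_measurable \<nu> = (borel_measurable borel :: (complex \<Rightarrow> 'b::topological_space) set)"
  by (rule measurable_cong_sets[OF sets_nu refl])

lemma meas_id_nu[measurable]: "(\<lambda>x. x) \<in> borel_measurable \<nu>"
  unfolding meas_eq_nu by simp

lemma gram_le: assumes "m \<le> n"
  shows "(\<integral>z. z ^ n * cnj (z ^ m) \<partial>\<nu>) = (\<integral>x. P n x * cnj (P m x) \<partial>\<mu>)"
proof -
  define k where "k = n - m"
  have n: "n = m + k" using assms by (simp add: k_def)
  have "(\<integral>z. z ^ n * cnj (z ^ m) \<partial>\<nu>) = (\<integral>z. z ^ k \<partial>\<nu>)"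
  proof (rule integral_cong_AE)
    show "AE z in \<nu>. z ^ n * cnj (z ^ m) = z ^ k"
      using circ_nu
    proof eventually_elim
      case (elim z)
      have "z * cnj z = 1" using elim complex_norm_square[of z] by simp
      then have "z ^ m * cnj z ^ m = 1" by (simp flip: power_mult_distrib)
      then show ?case unfolding n by (simp add: power_add algebra_simps)
    qed
  qed measurable
  also have "\<dots> = (\<integral>x. P k x \<partial>\<mu>)" by (rule mom)
  also have "\<dots> = (\<integral>x. P k x * cnj ((\<lambda>_. 1) x) \<partial>\<mu>)" by simp
  also have "\<dots> = (\<integral>x. (U ^^ m) (P k) x * cnj ((U ^^ m) (\<lambda>_. 1) x) \<partial>\<mu>)"
    by (rule Un_iso[OF L2_P L2_const, symmetric])
  also have "\<dots> = (\<integral>x. P n x * cnj (P m x) \<partial>\<mu>)"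
    unfolding n P_def by (simp add: funpow_add)
  finally show ?thesis .
qed

lemma gram: "(\<integral>z. z ^ n * cnj (z ^ m) \<partial>\<nu>) = (\<integral>x. P n x * cnj (P m x) \<partial>\<mu>)"
proof (cases "m \<le> n")
  case True then show ?thesis by (rule gram_le)
next
  case False
  then have "n \<le> m" by simp
  have "(\<integral>z. z ^ n * cnj (z ^ m) \<partial>\<nu>) = (\<integral>z. cnj (z ^ m * cnj (z ^ n)) \<partial>\<nu>)"
    by (rule Bochner_Integration.integral_cong) (simp_all add: mult.commute)
  also have "\<dots> = cnj (\<integral>z. z ^ m * cnj (z ^ n) \<partial>\<nu>)" by (rule Bochner_Integration.integral_cnj)
  also have "\<dots> = cnj (\<integral>x. P m x * cnj (P n x) \<partial>\<mu>)" by (simp only: gram_le[OF \<open>n \<le> m\<close>])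
  also have "\<dots> = (\<integral>x. cnj (P m x * cnj (P n x)) \<partial>\<mu>)" by (rule Bochner_Integration.integral_cnj[symmetric])
  also have "\<dots> = (\<integral>x. P n x * cnj (P m x) \<partial>\<mu>)"
    by (rule Bochner_Integration.integral_cong) (simp_all add: mult.commute)
  finally show ?thesis .
qed

lemma nu_eq: "(\<integral>z. (cmod (\<Sum>n<N. b n * z ^ n))\<^sup>2 \<partial>\<nu>) = (\<integral>x. (cmod (\<Sum>n<N. b n * P n x))\<^sup>2 \<partial>\<mu>)"
proof -
  have i1: "integrable \<nu> (\<lambda>z. z ^ n * cnj (z ^ m))" for n m
  proof (rule nu.integrable_const_bound[where B=1])
    show "AE z in \<nu>. norm (z ^ n * cnj (z ^ m)) \<le> 1"
      using circ_nu by eventually_elim (simp add: norm_mult norm_power)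
  qed measurable
  have i2: "integrable \<mu> (\<lambda>x. P n x * cnj (P m x))" for n m
    by (rule L2_mult[OF L2_P L2_cnj[OF L2_P]])
  have "complex_of_real (\<integral>z. (cmod (\<Sum>n<N. b n * z ^ n))\<^sup>2 \<partial>\<nu>) =
        complex_of_real (\<integral>x. (cmod (\<Sum>n<N. b n * P n x))\<^sup>2 \<partial>\<mu>)"
    using quad[of "{..<N}" \<nu> "\<lambda>n z. z ^ n" b] quad[of "{..<N}" \<mu> P b] i1 i2
    by (simp add: gram[simplified])
  then show ?thesis by simp
qed

end



lemma recip_id: assumes "cmod u = 1" "r > 1"
  shows "1 / (1 - complex_of_real r * u) = - cnj u / (complex_of_real r - cnj u)"
proof -
  have uu: "u * cnj u = 1" using assms(1) complex_norm_square[of u] by simp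
  have n1: "1 - complex_of_real r * u \<noteq> 0"
  proof
    assume "1 - complex_of_real r * u = 0"
    then have "cmod (complex_of_real r * u) = 1" by (metis norm_one right_minus_eq)
    then show False using assms by (simp add: norm_mult)
  qed
  have n2: "complex_of_real r - cnj u \<noteq> 0"
  proof
    assume "complex_of_real r - cnj u = 0"
    then have "cmod (complex_of_real r) = cmod (cnj u)" by simp
    then show False using assms by simp
  qed
  have "- cnj u * (1 - complex_of_real r * u) = complex_of_real r - cnj u"
    using uu by (simp add: algebra_simps)
  then show ?thesis using n1 n2 by (simp add: field_simps)
qed

context clark begin

lemma series: assumes f: "L2 f" and r: "0 \<le> r" "r < 1" and z: "cmod z = 1"
  shows "(\<lambda>N. \<Sum>n<N. (complex_of_real (r ^ n) * aco f n) * z ^ n) \<longlonglongrightarrow> Tr \<mu> r f z"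
proof -
  note [measurable] = L2_meas[OF f]
  define q where "q \<xi> = complex_of_real r * cnj \<xi> * z" for \<xi>
  define s where "s N \<xi> = f \<xi> * (\<Sum>n<N. q \<xi> ^ n)" for N \<xi>
  have eqs: "(\<integral>\<xi>. s N \<xi> \<partial>\<mu>) = (\<Sum>n<N. (complex_of_real (r ^ n) * aco f n) * z ^ n)" for N
  proof -
    have "(\<integral>\<xi>. s N \<xi> \<partial>\<mu>) = (\<integral>\<xi>. (\<Sum>n<N. (f \<xi> * cnj \<xi> ^ n) * (complex_of_real (r ^ n) * z ^ n)) \<partial>\<mu>)"
      unfolding s_def q_def
      by (rule Bochner_Integration.integral_cong[OF refl])
         (simp add: sum_distrib_left power_mult_distrib algebra_simps)
    also have "\<dots> = (\<Sum>n<N. (\<integral>\<xi>. f \<xi> * cnj \<xi> ^ n \<partial>\<mu>) * (complex_of_real (r ^ n) * z ^ n))"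
    proof (subst Bochner_Integration.integral_sum)
      show "integrable \<mu> (\<lambda>\<xi>. f \<xi> * cnj \<xi> ^ n * (complex_of_real (r ^ n) * z ^ n))" for n
        using L2_int[OF L2_pow(1)[OF f, of n]] by (simp add: mult.commute)
      show "(\<Sum>n<N. \<integral>\<xi>. f \<xi> * cnj \<xi> ^ n * (complex_of_real (r ^ n) * z ^ n) \<partial>\<mu>) =
            (\<Sum>n<N. (\<integral>\<xi>. f \<xi> * cnj \<xi> ^ n \<partial>\<mu>) * (complex_of_real (r ^ n) * z ^ n))"
        by simp
    qed
    finally show ?thesis by (simp add: aco_def algebra_simps)
  qed
  have lim: "(\<lambda>N. \<integral>\<xi>. s N \<xi> \<partial>\<mu>) \<longlonglongrightarrow> (\<integral>\<xi>. f \<xi> / (1 - q \<xi>) \<partial>\<mu>)"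
  proof (rule integral_dominated_convergence[where w="\<lambda>\<xi>. cmod (f \<xi>) / (1 - r)"])
    show "(\<lambda>\<xi>. f \<xi> / (1 - q \<xi>)) \<in> borel_measurable \<mu>" unfolding q_def by measurable
    show "s N \<in> borel_measurable \<mu>" for N unfolding s_def q_def by measurable
    show "integrable \<mu> (\<lambda>\<xi>. cmod (f \<xi>) / (1 - r))" using L2_int[OF f] by simp
    show "AE \<xi> in \<mu>. (\<lambda>N. s N \<xi>) \<longlonglongrightarrow> f \<xi> / (1 - q \<xi>)"
      using circ
    proof eventually_elim
      case (elim x)
      have "cmod (q x) = r" using elim z r by (simp add: q_def norm_mult)
      then have "(\<lambda>n. q x ^ n) sums (1 / (1 - q x))" using r by (intro geometric_sums) simp
      then have "(\<lambda>N. \<Sum>n<N. q x ^ n) \<longlonglongrightarrow> 1 / (1 - q x)" by (simp add: sums_def)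
      then have "(\<lambda>N. f x * (\<Sum>n<N. q x ^ n)) \<longlonglongrightarrow> f x * (1 / (1 - q x))"
        by (intro tendsto_mult tendsto_const)
      then show ?case by (simp add: s_def)
    qed
    show "AE \<xi> in \<mu>. norm (s N \<xi>) \<le> cmod (f \<xi>) / (1 - r)" for N
      using circ
    proof eventually_elim
      case (elim x)
      have "cmod (\<Sum>n<N. q x ^ n) \<le> (\<Sum>n<N. cmod (q x ^ n))" by (rule norm_sum)
      also have "\<dots> = (\<Sum>n<N. r ^ n)" using elim z r by (simp add: q_def norm_mult norm_power)
      also have "\<dots> = (1 - r ^ N) / (1 - r)" using r by (simp add: sum_gp_strict)
      also have "\<dots> \<le> 1 / (1 - r)" using r by (intro divide_right_mono) auto
      finally have "cmod (f x) * cmod (\<Sum>n<N. q x ^ n) \<le> cmod (f x) * (1 / (1 - r))"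
        by (intro mult_left_mono) auto
      then show ?case by (simp add: s_def norm_mult)
    qed
  qed
  have "(\<integral>\<xi>. f \<xi> / (1 - q \<xi>) \<partial>\<mu>) = Tr \<mu> r f z" by (simp add: Tr_def q_def)
  then show ?thesis using lim eqs by simp
qed

lemma aco_bound: assumes f: "L2 f" shows "cmod (aco f n) \<le> (\<integral>x. cmod (f x) \<partial>\<mu>)"
proof -
  note [measurable] = L2_meas[OF f]
  have "cmod (aco f n) \<le> (\<integral>x. cmod (f x * cnj x ^ n) \<partial>\<mu>)" unfolding aco_def by (rule integral_norm_bound)
  also have "\<dots> = (\<integral>x. cmod (f x) \<partial>\<mu>)"
    by (rule integral_cong_AE) (use circ in \<open>auto elim!: eventually_mono simp: norm_mult norm_power\<close>)
  finally show ?thesis .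
qed

end

context clark2 begin

interpretation nu: prob_space \<nu> by (rule nu_prob)

lemma Tr_meas: assumes f: "L2 f" shows "Tr \<mu> r f \<in> borel_measurable \<nu>"
proof -
  have fb: "f \<in> borel_measurable borel" using L2_meas[OF f] by (simp add: meas_eq)
  have eq: "Tr \<mu> r f = (\<lambda>z. \<integral>\<xi>. f \<xi> / (1 - complex_of_real r * cnj \<xi> * z) \<partial>\<mu>)"
    by (simp add: fun_eq_iff Tr_def)
  have s: "sets (\<nu> \<Otimes>\<^sub>M \<mu>) = sets (borel \<Otimes>\<^sub>M borel)" by (rule sets_pair_measure_cong[OF sets_nu sets_mu])
  have "(\<lambda>(z, \<xi>). f \<xi> / (1 - complex_of_real r * cnj \<xi> * z)) \<in> borel_measurable (\<nu> \<Otimes>\<^sub>M \<mu>)"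
    unfolding measurable_cong_sets[OF s refl] using fb by measurable
  then show ?thesis unfolding eq by (rule borel_measurable_lebesgue_integral)
qed

lemma main_lt1: assumes f: "L2 f" and r: "0 \<le> r" "r < 1" and a: "\<alpha> \<noteq> 1"
  shows "integrable \<nu> (\<lambda>z. (cmod (Tr \<mu> r f z))\<^sup>2)"
    and "(\<integral>z. (cmod (Tr \<mu> r f z))\<^sup>2 \<partial>\<nu>) \<le> 4 / (cmod (\<alpha> - 1))\<^sup>2 * (\<integral>x. (cmod (f x))\<^sup>2 \<partial>\<mu>)"
proof -
  note [measurable] = Tr_meas[OF f]
  define b where "b n = complex_of_real (r ^ n) * aco f n" for n
  define A where "A = (\<integral>x. cmod (f x) \<partial>\<mu>)"
  have A0: "0 \<le> A" unfolding A_def by simp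
  define S where "S N z = (cmod (\<Sum>n<N. b n * z ^ n))\<^sup>2" for N z
  have Sm: "S N \<in> borel_measurable \<nu>" for N unfolding S_def by measurable
  have bnd: "AE z in \<nu>. norm (S N z) \<le> (A / (1 - r))\<^sup>2" for N
    using circ_nu
  proof eventually_elim
    case (elim z)
    have "cmod (\<Sum>n<N. b n * z ^ n) \<le> (\<Sum>n<N. cmod (b n * z ^ n))" by (rule norm_sum)
    also have "\<dots> \<le> (\<Sum>n<N. r ^ n * A)"
    proof (rule sum_mono)
      fix n
      have "cmod (b n * z ^ n) = r ^ n * cmod (aco f n)" using elim r by (simp add: b_def norm_mult norm_power)
      also have "\<dots> \<le> r ^ n * A" unfolding A_def using r by (intro mult_left_mono aco_bound[OF f]) auto
      finally show "cmod (b n * z ^ n) \<le> r ^ n * A" .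
    qed
    also have "\<dots> = (1 - r ^ N) / (1 - r) * A" using r by (simp add: sum_gp_strict sum_distrib_right[symmetric])
    also have "\<dots> \<le> 1 / (1 - r) * A" using r A0 by (intro mult_right_mono divide_right_mono) auto
    finally have "cmod (\<Sum>n<N. b n * z ^ n) \<le> A / (1 - r)" by simp
    then show ?case unfolding S_def by (simp add: power_mono)
  qed
  have lim: "AE z in \<nu>. (\<lambda>N. S N z) \<longlonglongrightarrow> (cmod (Tr \<mu> r f z))\<^sup>2"
    using circ_nu
  proof eventually_elim
    case (elim z)
    show ?case unfolding S_def b_def
      by (intro tendsto_power tendsto_norm series[OF f r elim])
  qed
  have m: "(\<lambda>z. (cmod (Tr \<mu> r f z))\<^sup>2) \<in> borel_measurable \<nu>" by measurable
  show "integrable \<nu> (\<lambda>z. (cmod (Tr \<mu> r f z))\<^sup>2)"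
    by (rule Bochner_Integration.integrable_dominated_convergence[OF m Sm _ lim bnd]) simp
  have conv: "(\<lambda>N. \<integral>z. S N z \<partial>\<nu>) \<longlonglongrightarrow> (\<integral>z. (cmod (Tr \<mu> r f z))\<^sup>2 \<partial>\<nu>)"
    by (rule Bochner_Integration.integral_dominated_convergence[OF m Sm _ lim bnd]) simp
  have "(\<integral>z. S N z \<partial>\<nu>) \<le> 4 / (cmod (\<alpha> - 1))\<^sup>2 * (\<integral>x. (cmod (f x))\<^sup>2 \<partial>\<mu>)" for N
    unfolding S_def nu_eq b_def using G_bound[OF f r(1) _ a, of N] r by simp
  then show "(\<integral>z. (cmod (Tr \<mu> r f z))\<^sup>2 \<partial>\<nu>) \<le> 4 / (cmod (\<alpha> - 1))\<^sup>2 * (\<integral>x. (cmod (f x))\<^sup>2 \<partial>\<mu>)"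
    by (intro LIMSEQ_le_const2[OF conv]) auto
qed

end



context clark2 begin

interpretation nu: prob_space \<nu> by (rule nu_prob)

lemma main_gt1: assumes f: "L2 f" and r: "1 < r" and a: "\<alpha> \<noteq> 1"
  shows "integrable \<nu> (\<lambda>z. (cmod (Tr \<mu> r f z))\<^sup>2)"
    and "(\<integral>z. (cmod (Tr \<mu> r f z))\<^sup>2 \<partial>\<nu>) \<le> 4 / (cmod (\<alpha> - 1))\<^sup>2 * (\<integral>x. (cmod (f x))\<^sup>2 \<partial>\<mu>)"
proof -
  note [measurable] = L2_meas[OF f]
  define s where "s = 1 / r"
  have s: "0 \<le> s" "s < 1" using r by (auto simp: s_def)
  define h where "h \<xi> = cnj (f \<xi> * \<xi>)" for \<xi>
  have Lh: "L2 h" unfolding h_def using L2_cnj[OF L2_pow(2)[OF f]] by (simp add: mult.commute)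
  have hn: "(\<integral>x. (cmod (h x))\<^sup>2 \<partial>\<mu>) = (\<integral>x. (cmod (f x))\<^sup>2 \<partial>\<mu>)"
  proof -
    have "\<And>x. cmod (h x) = cmod (x * f x)" by (simp add: h_def norm_mult)
    then show ?thesis using L2_unimod(2)[OF f meas_id circ_pow(2)] by simp
  qed
  note [measurable] = Tr_meas[OF f] Tr_meas[OF Lh]
  have ae: "AE z in \<nu>. (cmod (Tr \<mu> r f z))\<^sup>2 = (1 / r)\<^sup>2 * (cmod (Tr \<mu> s h z))\<^sup>2"
    using circ_nu
  proof eventually_elim
    case (elim z)
    note zc = elim
    have "Tr \<mu> r f z = (\<integral>\<xi>. (- cnj z / complex_of_real r) * (f \<xi> * \<xi> / (1 - complex_of_real s * \<xi> * cnj z)) \<partial>\<mu>)"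
      unfolding Tr_def
    proof (rule integral_cong_AE)
      show "AE \<xi> in \<mu>. f \<xi> / (1 - complex_of_real r * cnj \<xi> * z) =
          - cnj z / complex_of_real r * (f \<xi> * \<xi> / (1 - complex_of_real s * \<xi> * cnj z))"
        using circ
      proof eventually_elim
        case (elim \<xi>)
        have u: "cmod (cnj \<xi> * z) = 1" using elim zc by (simp add: norm_mult)
        have "1 / (1 - complex_of_real r * (cnj \<xi> * z)) = - cnj (cnj \<xi> * z) / (complex_of_real r - cnj (cnj \<xi> * z))"
          by (rule recip_id[OF u r])
        moreover have "- cnj (cnj \<xi> * z) / (complex_of_real r - cnj (cnj \<xi> * z)) =
            - cnj z / complex_of_real r * (\<xi> / (1 - complex_of_real s * \<xi> * cnj z))"
          using r by (simp add: s_def field_simps of_real_def)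
        ultimately have "1 / (1 - complex_of_real r * cnj \<xi> * z) = - cnj z / complex_of_real r * (\<xi> / (1 - complex_of_real s * \<xi> * cnj z))"
          by (simp add: mult.assoc)
        then show ?case by (simp add: divide_inverse algebra_simps)
      qed
    qed measurable
    also have "\<dots> = (- cnj z / complex_of_real r) * (\<integral>\<xi>. f \<xi> * \<xi> / (1 - complex_of_real s * \<xi> * cnj z) \<partial>\<mu>)"
      by (rule integral_mult_right_zero)
    also have "(\<integral>\<xi>. f \<xi> * \<xi> / (1 - complex_of_real s * \<xi> * cnj z) \<partial>\<mu>) = cnj (Tr \<mu> s h z)"
      unfolding Tr_def h_def
      by (subst Bochner_Integration.integral_cnj[symmetric]) (simp add: mult.commute)
    finally have "Tr \<mu> r f z = - cnj z / complex_of_real r * cnj (Tr \<mu> s h z)" .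
    then show ?case using zc r by (simp add: norm_mult norm_divide power_mult_distrib power_divide)
  qed
  have m1: "(\<lambda>z. (cmod (Tr \<mu> r f z))\<^sup>2) \<in> borel_measurable \<nu>" by measurable
  have m2: "(\<lambda>z. (1 / r)\<^sup>2 * (cmod (Tr \<mu> s h z))\<^sup>2) \<in> borel_measurable \<nu>" by measurable
  have i: "integrable \<nu> (\<lambda>z. (cmod (Tr \<mu> s h z))\<^sup>2)" by (rule main_lt1(1)[OF Lh s a])
  show "integrable \<nu> (\<lambda>z. (cmod (Tr \<mu> r f z))\<^sup>2)"
    using integrable_cong_AE[OF m1 m2 ae] i by simp
  have "(\<integral>z. (cmod (Tr \<mu> r f z))\<^sup>2 \<partial>\<nu>) = (1 / r)\<^sup>2 * (\<integral>z. (cmod (Tr \<mu> s h z))\<^sup>2 \<partial>\<nu>)"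
    using integral_cong_AE[OF m1 m2 ae] by simp
  also have "\<dots> \<le> 1 * (\<integral>z. (cmod (Tr \<mu> s h z))\<^sup>2 \<partial>\<nu>)"
    using r by (intro mult_right_mono) (auto simp: power_le_one)
  also have "\<dots> \<le> 4 / (cmod (\<alpha> - 1))\<^sup>2 * (\<integral>x. (cmod (f x))\<^sup>2 \<partial>\<mu>)"
    using main_lt1(2)[OF Lh s a] hn by simp
  finally show "(\<integral>z. (cmod (Tr \<mu> r f z))\<^sup>2 \<partial>\<nu>) \<le> 4 / (cmod (\<alpha> - 1))\<^sup>2 * (\<integral>x. (cmod (f x))\<^sup>2 \<partial>\<mu>)" .
qed

end

theorem theorem2p8:
  fixes \<mu> \<nu> :: "complex measure" and \<alpha> :: complex
  assumes "prob_space \<mu>" and "sets \<mu> = sets borel" and "AE z in \<mu>. cmod z = 1"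
    and "cmod \<alpha> = 1" and "\<alpha> \<noteq> 1"
    and "is_spectral_measure_alpha \<mu> \<alpha> \<nu>"
  shows "\<exists>C::real. \<forall>r::real. 0 \<le> r \<and> r \<noteq> 1 \<longrightarrow>
           (\<forall>f. f \<in> borel_measurable \<mu> \<and> integrable \<mu> (\<lambda>\<xi>. (cmod (f \<xi>))\<^sup>2) \<longrightarrow>
              Tr \<mu> r f \<in> borel_measurable \<nu> \<and>
              integrable \<nu> (\<lambda>z. (cmod (Tr \<mu> r f z))\<^sup>2) \<and>
              (\<integral>z. (cmod (Tr \<mu> r f z))\<^sup>2 \<partial>\<nu>) \<le> C\<^sup>2 * (\<integral>\<xi>. (cmod (f \<xi>))\<^sup>2 \<partial>\<mu>))"
proof -
  interpret clark2 \<mu> \<alpha> \<nu>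
    using assms by (simp add: clark2_def clark_def clark_axioms_def clark2_axioms_def)
  have C: "(2 / cmod (\<alpha> - 1))\<^sup>2 = 4 / (cmod (\<alpha> - 1))\<^sup>2" by (simp add: power_divide)
  show ?thesis
  proof (intro exI allI impI conjI)
    fix r :: real and f
    assume r: "0 \<le> r \<and> r \<noteq> 1" and fa: "f \<in> borel_measurable \<mu> \<and> integrable \<mu> (\<lambda>\<xi>. (cmod (f \<xi>))\<^sup>2)"
    have f: "L2 f" using fa by (simp add: L2_def)
    show "Tr \<mu> r f \<in> borel_measurable \<nu>" by (rule Tr_meas[OF f])
    show "integrable \<nu> (\<lambda>z. (cmod (Tr \<mu> r f z))\<^sup>2)"
    proof (cases "r < 1")
      case True then show ?thesis using main_lt1(1)[OF f _ True assms(5)] r by simp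
    next
      case False then show ?thesis using main_gt1(1)[OF f _ assms(5)] r by simp
    qed
    have bound: "(\<integral>z. (cmod (Tr \<mu> r f z))\<^sup>2 \<partial>\<nu>) \<le> 4 / (cmod (\<alpha> - 1))\<^sup>2 * (\<integral>\<xi>. (cmod (f \<xi>))\<^sup>2 \<partial>\<mu>)"
    proof (cases "r < 1")
      case True then show ?thesis using main_lt1(2)[OF f _ True assms(5)] r by simp
    next
      case False then show ?thesis using main_gt1(2)[OF f _ assms(5)] r by simp
    qed
    show "(\<integral>z. (cmod (Tr \<mu> r f z))\<^sup>2 \<partial>\<nu>) \<le> (2 / cmod (\<alpha> - 1))\<^sup>2 * (\<integral>\<xi>. (cmod (f \<xi>))\<^sup>2 \<partial>\<mu>)"
      by (subst C) (rule bound)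
  qed
qed



end
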